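(* Let $T$ and $S$ be binary search trees on the same set of $n$ keys, with nodes identified via their keys. Define $w_T(v)=1/4^{d_T(v)}$, $w(v)=w_T(v)$, let $s_T(v)$ (resp. $s(v)$) be the sum of the weights in the subtree of $v$ in $T$ (resp. $S$), including $v$, let $r_T(v)=\log_2 s_T(v)$ and $r(v)=\log_2 s(v)$, and let $P(T)=\sum_{v}r_T(v)$, $P(S)=\sum_v r(v)$ and $\Phi=P(S)-P(T)$. Then $-n<\Phi$ for every pair of such trees $S$ and $T$.
   Context: $d_T(v)$ is the depth of $v$ in $T$ (distance to the root; the root has depth $0$). Logarithms are base $2$. *)

theory Defs
  imports Complex_Main "HOL-Library.Tree"
begin

fun depth :: "'a::linorder tree \<Rightarrow> 'a \<Rightarrow> nat" where
  "depth Leaf x = 0"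
| "depth (Node l a r) x =
     (if x = a then 0 else if x < a then Suc (depth l x) else Suc (depth r x))"

fun subtree_at :: "'a::linorder tree \<Rightarrow> 'a \<Rightarrow> 'a tree" where
  "subtree_at Leaf x = Leaf"
| "subtree_at (Node l a r) x =
     (if x = a then Node l a r else if x < a then subtree_at l x else subtree_at r x)"

definition wt :: "'a::linorder tree \<Rightarrow> 'a \<Rightarrow> real" where
  "wt T v = 1 / 4 ^ depth T v"

definition subtree_weight :: "('a \<Rightarrow> real) \<Rightarrow> 'a::linorder tree \<Rightarrow> 'a \<Rightarrow> real" where
  "subtree_weight w U v = (\<Sum>u\<in>set_tree (subtree_at U v). w u)"

definition pot :: "('a \<Rightarrow> real) \<Rightarrow> 'a::linorder tree \<Rightarrow> real" where
  "pot w U = (\<Sum>v\<in>set_tree U. log 2 (subtree_weight w U v))"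

end

theory Submission
  imports Defs
begin

definition fw :: "'a::linorder tree \<Rightarrow> real" where
  "fw t = (\<Sum>u\<in>set_tree t. 1 / 4 ^ depth t u)"

lemma fw_lt2: "bst t \<Longrightarrow> fw t < 2"
proof (induction t)
  case Leaf
  then show ?case by (simp add: fw_def)
next
  case (Node l a r)
  have bl: "bst l" and br: "bst r" using Node.prems by auto
  have ltl: "\<And>u. u \<in> set_tree l \<Longrightarrow> u < a" and gtr: "\<And>u. u \<in> set_tree r \<Longrightarrow> a < u"
    using Node.prems by auto
  have d1: "set_tree l \<inter> set_tree r = {}" using ltl gtr by force
  have a1: "a \<notin> set_tree l \<union> set_tree r" using ltl gtr by blast
  have "fw (Node l a r) = 1 + ((\<Sum>u\<in>set_tree l. 1 / 4 ^ depth (Node l a r) u) +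
          (\<Sum>u\<in>set_tree r. 1 / 4 ^ depth (Node l a r) u))"
    unfolding fw_def using a1 d1 by (simp add: sum.union_disjoint)
  also have "(\<Sum>u\<in>set_tree l. 1 / 4 ^ depth (Node l a r) u) = fw l / 4"
    unfolding fw_def sum_divide_distrib
    by (rule sum.cong) (use ltl in auto)
  also have "(\<Sum>u\<in>set_tree r. 1 / 4 ^ depth (Node l a r) u) = fw r / 4"
    unfolding fw_def sum_divide_distrib
    by (rule sum.cong) (use gtr in \<open>auto simp: not_less_iff_gr_or_eq dest: less_asym\<close>)
  finally show ?case using Node.IH bl br by simp
qed

lemma sub_props:
  "bst T \<Longrightarrow> v \<in> set_tree T \<Longrightarrow>
   v \<in> set_tree (subtree_at T v) \<and> set_tree (subtree_at T v) \<subseteq> set_tree T \<and> bst (subtree_at T v) \<and>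
   (\<forall>u\<in>set_tree (subtree_at T v). depth T u = depth T v + depth (subtree_at T v) u)"
proof (induction T)
  case Leaf
  then show ?case by simp
next
  case (Node l a r)
  have ltl: "\<And>u. u \<in> set_tree l \<Longrightarrow> u < a" and gtr: "\<And>u. u \<in> set_tree r \<Longrightarrow> a < u"
    using Node.prems by auto
  show ?case
  proof (cases "v = a")
    case True
    then show ?thesis using Node.prems by auto
  next
    case False
    show ?thesis
    proof (cases "v < a")
      case True
      have "v \<notin> set_tree r" using gtr True less_asym by blast
      hence "v \<in> set_tree l" using Node.prems False by auto
      have "bst l" using Node.prems by simp
      have IH: "v \<in> set_tree (subtree_at l v) \<and> set_tree (subtree_at l v) \<subseteq> set_tree l \<and> bst (subtree_at l v) \<and>
   (\<forall>u\<in>set_tree (subtree_at l v). depth l u = depth l v + depth (subtree_at l v) u)" by (rule Node.IH(1)[OF \<open>bst l\<close> \<open>v \<in> set_tree l\<close>])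
      have "\<forall>u\<in>set_tree (subtree_at l v). u \<noteq> a \<and> u < a" using IH ltl by fastforce
      note U = this
      have e1: "subtree_at (Node l a r) v = subtree_at l v" using True False by simp
      have e2: "depth (Node l a r) v = Suc (depth l v)" using True False by simp
      have e3: "\<forall>u\<in>set_tree (subtree_at l v). depth (Node l a r) u = Suc (depth l u)"
        using U by simp
      have e4: "set_tree l \<subseteq> set_tree (Node l a r)" by auto
      show ?thesis unfolding e1 e2 using IH e3 e4 by (metis (no_types, lifting) add_Suc dual_order.trans)
    next
      case F2: False
      have "v > a" using F2 False by auto
      have "v \<notin> set_tree l" using ltl \<open>v > a\<close> less_asym by blast
      hence "v \<in> set_tree r" using Node.prems False by auto
      have "bst r" using Node.prems by simp
      have IH: "v \<in> set_tree (subtree_at r v) \<and> set_tree (subtree_at r v) \<subseteq> set_tree r \<and> bst (subtree_at r v) \<and>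
   (\<forall>u\<in>set_tree (subtree_at r v). depth r u = depth r v + depth (subtree_at r v) u)" by (rule Node.IH(2)[OF \<open>bst r\<close> \<open>v \<in> set_tree r\<close>])
      have "\<forall>u\<in>set_tree (subtree_at r v). u \<noteq> a \<and> \<not> u < a" using IH gtr by fastforce
      note U = this
      have e1: "subtree_at (Node l a r) v = subtree_at r v" using F2 False by simp
      have e2: "depth (Node l a r) v = Suc (depth r v)" using F2 False by simp
      have e3: "\<forall>u\<in>set_tree (subtree_at r v). depth (Node l a r) u = Suc (depth r u)"
        using U by simp
      have e4: "set_tree r \<subseteq> set_tree (Node l a r)" by auto
      show ?thesis unfolding e1 e2 using IH e3 e4 by (metis (no_types, lifting) add_Suc dual_order.trans)
    qed
  qed
qed

lemma sT_bound:
  assumes "bst T" "v \<in> set_tree T"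
  shows "subtree_weight (wt T) T v < 2 * wt T v"
proof -
  from sub_props[OF assms] have P: "bst (subtree_at T v)"
    "\<forall>u\<in>set_tree (subtree_at T v). depth T u = depth T v + depth (subtree_at T v) u" by blast+
  have "subtree_weight (wt T) T v = wt T v * fw (subtree_at T v)"
    unfolding subtree_weight_def fw_def wt_def sum_distrib_left
  proof (rule sum.cong)
    fix u assume "u \<in> set_tree (subtree_at T v)"
    then have "depth T u = depth T v + depth (subtree_at T v) u" using P(2) by blast
    then show "(1::real) / 4 ^ depth T u = 1 / 4 ^ depth T v * (1 / 4 ^ depth (subtree_at T v) u)"
      by (simp add: power_add)
  qed simp
  also have "\<dots> < wt T v * 2"
    using fw_lt2[OF P(1)] by (intro mult_strict_left_mono) (auto simp: wt_def)
  finally show ?thesis by simp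
qed

lemma sS_bound:
  assumes "bst S" "v \<in> set_tree S"
  shows "subtree_weight (wt T) S v \<ge> wt T v"
proof -
  from sub_props[OF assms] have "v \<in> set_tree (subtree_at S v)" by blast
  then show ?thesis unfolding subtree_weight_def
    by (intro member_le_sum) (auto simp: wt_def)
qed

theorem lemma4p2:
  fixes T S :: "'a::linorder tree"
  assumes "bst T" and "bst S"
    and "set_tree S = set_tree T"
    and "n = card (set_tree T)"
    and "n \<ge> 1"
  shows "- real n < pot (wt T) S - pot (wt T) T"
proof -
  have ne: "set_tree T \<noteq> {}" using assms(4,5) by auto
  have each: "-1 < log 2 (subtree_weight (wt T) S v) - log 2 (subtree_weight (wt T) T v)"
    if v: "v \<in> set_tree T" for v
  proof -
    let ?w = "wt T v"
    have wp: "?w > 0" by (simp add: wt_def)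
    have a: "subtree_weight (wt T) S v \<ge> ?w" using sS_bound[OF assms(2), of v T] v assms(3) by simp
    have b: "subtree_weight (wt T) T v < 2 * ?w" using sT_bound[OF assms(1) v] .
    have bp: "subtree_weight (wt T) T v > 0"
      unfolding subtree_weight_def
    proof (rule sum_pos)
      show "finite (set_tree (subtree_at T v))" by simp
      show "set_tree (subtree_at T v) \<noteq> {}" using sub_props[OF assms(1) v] by blast
    qed (simp add: wt_def)
    have "log 2 (subtree_weight (wt T) T v) < log 2 (2 * ?w)" using b bp by simp
    also have "\<dots> = 1 + log 2 ?w" using wp by (simp add: log_mult)
    also have "log 2 ?w \<le> log 2 (subtree_weight (wt T) S v)" using a wp by simp
    finally show ?thesis by simp
  qed
  have "(\<Sum>v\<in>set_tree T. (-1::real)) < (\<Sum>v\<in>set_tree T. log 2 (subtree_weight (wt T) S v) - log 2 (subtree_weight (wt T) T v))"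
    by (rule sum_strict_mono) (simp, rule ne, rule each)
  then show ?thesis using assms(3,4) unfolding pot_def by (simp add: sum_subtractf)
qed

end
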